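(* Let $k\geq 1$ and let $T$ and $T'$ be binary phylogenetic $X$-trees with $|X|=2k$. Let $P_1,\ldots,P_k$ and $P'_1,\ldots,P'_k$ be the unique sets of $k$ pairwise edge-disjoint leaf-to-leaf paths in $T$ and $T'$, respectively. Let $\mathcal{E}=\{\{a_i,b_i\}: a_i,b_i \text{ are the endpoints of } P_i,\ 1\le i\le k\}$ and $\mathcal{E}'=\{\{a'_i,b'_i\}: a'_i,b'_i \text{ are the endpoints of } P'_i,\ 1\le i\le k\}$. Then $A_k(T)=A_k(T')$ if and only if $\mathcal{E}=\mathcal{E}'$.
   Context: A phylogenetic $X$-tree is a tree with no vertices of degree 2 whose leaves are bijectively labelled by (and identified with) $X$; binary means maximum degree 3. A leaf-to-leaf path is a path whose two endpoints are (distinct) leaves. When $|X|=2k$, a binary phylogenetic $X$-tree contains exactly one set of $k$ pairwise edge-disjoint leaf-to-leaf paths. For a binary character $f: X\to\{a,b\}$, $l(f,T)$ is the minimum, over all maps $g:V(T)\to\{a,b\}$ with $g|_X=f$, of the number of edges $\{u,v\}$ with $g(u)\ne g(v)$; $A_k(T)$ is the set of all binary characters $f$ on $X$ with $l(f,T)=k$. *)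

theory Defs
  imports Main "HOL-Library.FuncSet"
begin

definition graph :: "'v set \<Rightarrow> 'v set set \<Rightarrow> bool" where
  "graph V E \<longleftrightarrow> finite V \<and> (\<forall>e\<in>E. \<exists>u v. e = {u, v} \<and> u \<noteq> v \<and> u \<in> V \<and> v \<in> V)"

definition is_path :: "'v set set \<Rightarrow> 'v list \<Rightarrow> bool" where
  "is_path E p \<longleftrightarrow> p \<noteq> [] \<and> distinct p \<and> (\<forall>i. Suc i < length p \<longrightarrow> {p ! i, p ! Suc i} \<in> E)"

definition connected_graph :: "'v set \<Rightarrow> 'v set set \<Rightarrow> bool" where
  "connected_graph V E \<longleftrightarrow>
     (\<forall>u\<in>V. \<forall>v\<in>V. \<exists>p. is_path E p \<and> hd p = u \<and> last p = v)"

definition has_cycle :: "'v set set \<Rightarrow> bool" where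
  "has_cycle E \<longleftrightarrow> (\<exists>c. 3 \<le> length c \<and> is_path E c \<and> {last c, hd c} \<in> E)"

definition tree :: "'v set \<Rightarrow> 'v set set \<Rightarrow> bool" where
  "tree V E \<longleftrightarrow> graph V E \<and> V \<noteq> {} \<and> connected_graph V E \<and> \<not> has_cycle E"

definition degree :: "'v set set \<Rightarrow> 'v \<Rightarrow> nat" where
  "degree E v = card {e \<in> E. v \<in> e}"

definition leaves :: "'v set \<Rightarrow> 'v set set \<Rightarrow> 'v set" where
  "leaves V E = {v \<in> V. degree E v \<le> 1}"

definition phylo_tree :: "'v set \<Rightarrow> 'v set \<Rightarrow> 'v set set \<Rightarrow> bool" where
  "phylo_tree X V E \<longleftrightarrow> tree V E \<and> leaves V E = X \<and> (\<forall>v\<in>V. degree E v \<noteq> 2)"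

definition binary_phylo_tree :: "'v set \<Rightarrow> 'v set \<Rightarrow> 'v set set \<Rightarrow> bool" where
  "binary_phylo_tree X V E \<longleftrightarrow> phylo_tree X V E \<and> (\<forall>v\<in>V. degree E v \<le> 3)"

definition path_edges :: "'v list \<Rightarrow> 'v set set" where
  "path_edges p = {{p ! i, p ! Suc i} | i. Suc i < length p}"

definition leaf_to_leaf_path :: "'v set \<Rightarrow> 'v set set \<Rightarrow> 'v list \<Rightarrow> bool" where
  "leaf_to_leaf_path X E p \<longleftrightarrow> is_path E p \<and> hd p \<in> X \<and> last p \<in> X \<and> hd p \<noteq> last p"

definition edge_disjoint_l2l_family ::
  "'v set \<Rightarrow> 'v set set \<Rightarrow> nat \<Rightarrow> (nat \<Rightarrow> 'v list) \<Rightarrow> bool" where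
  "edge_disjoint_l2l_family X E k P \<longleftrightarrow>
     (\<forall>i<k. leaf_to_leaf_path X E (P i)) \<and>
     (\<forall>i<k. \<forall>j<k. i \<noteq> j \<longrightarrow> path_edges (P i) \<inter> path_edges (P j) = {})"

definition endpoint_pairs :: "nat \<Rightarrow> (nat \<Rightarrow> 'v list) \<Rightarrow> 'v set set" where
  "endpoint_pairs k P = {{hd (P i), last (P i)} | i. i < k}"

text \<open>Binary characters: states {a,b} rendered as bool.\<close>
definition changes :: "'v set set \<Rightarrow> ('v \<Rightarrow> bool) \<Rightarrow> nat" where
  "changes E g = card {e \<in> E. \<exists>u v. e = {u, v} \<and> g u \<noteq> g v}"

definition parsimony_score :: "'v set \<Rightarrow> 'v set set \<Rightarrow> ('v \<Rightarrow> bool) \<Rightarrow> nat" where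
  "parsimony_score X E f = (LEAST n. \<exists>g. (\<forall>x\<in>X. g x = f x) \<and> changes E g = n)"

definition A_k :: "nat \<Rightarrow> 'v set \<Rightarrow> 'v set set \<Rightarrow> ('v \<Rightarrow> bool) set" where
  "A_k k X E = {f \<in> X \<rightarrow>\<^sub>E (UNIV :: bool set). parsimony_score X E f = k}"

end

theory Submission
  imports Defs
begin


fun wk :: "'v set set \<Rightarrow> 'v list \<Rightarrow> bool" where
  "wk E [] = False"
| "wk E [x] = True"
| "wk E (x#y#xs) = ({x,y}\<in>E \<and> wk E (y#xs))"

fun pe :: "'v list \<Rightarrow> 'v set set" where
  "pe [] = {}"
| "pe [x] = {}"
| "pe (x#y#xs) = insert {x,y} (pe (y#xs))"

lemma idx_split:
  "(\<forall>i. Suc i < length (x#y#xs) \<longrightarrow> R ((x#y#xs)!i) ((x#y#xs)!Suc i)) \<longleftrightarrow>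
   R x y \<and> (\<forall>i. Suc i < length (y#xs) \<longrightarrow> R ((y#xs)!i) ((y#xs)!Suc i))"
proof
  assume H: "\<forall>i. Suc i < length (x#y#xs) \<longrightarrow> R ((x#y#xs)!i) ((x#y#xs)!Suc i)"
  have "R x y" using H[rule_format, of 0] by simp
  moreover have "\<forall>i. Suc i < length (y#xs) \<longrightarrow> R ((y#xs)!i) ((y#xs)!Suc i)"
    using H[rule_format, of "Suc _"] by simp
  ultimately show "R x y \<and> (\<forall>i. Suc i < length (y#xs) \<longrightarrow> R ((y#xs)!i) ((y#xs)!Suc i))" by blast
next
  assume H: "R x y \<and> (\<forall>i. Suc i < length (y#xs) \<longrightarrow> R ((y#xs)!i) ((y#xs)!Suc i))"
  show "\<forall>i. Suc i < length (x#y#xs) \<longrightarrow> R ((x#y#xs)!i) ((x#y#xs)!Suc i)"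
  proof (intro allI impI)
    fix i assume "Suc i < length (x#y#xs)"
    then show "R ((x#y#xs)!i) ((x#y#xs)!Suc i)" using H by (cases i) auto
  qed
qed

lemma wk_idx: "wk E p \<longleftrightarrow> p \<noteq> [] \<and> (\<forall>i. Suc i < length p \<longrightarrow> {p ! i, p ! Suc i} \<in> E)"
proof (induction p rule: wk.induct)
  case (3 E x y xs)
  show ?case
    using idx_split[of x y xs "\<lambda>a b. {a,b} \<in> E"] 3 by simp
qed auto

lemma is_path_wk: "is_path E p \<longleftrightarrow> distinct p \<and> wk E p"
  unfolding is_path_def wk_idx by auto

lemma pe_idx: "path_edges p = pe p"
proof (induction p rule: pe.induct)
  case (3 x y xs)
  have "path_edges (x#y#xs) = insert {x,y} (path_edges (y#xs))"
    unfolding path_edges_def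
  proof (rule set_eqI, rule iffI)
    fix e assume "e \<in> {{(x#y#xs) ! i, (x#y#xs) ! Suc i} |i. Suc i < length (x#y#xs)}"
    then obtain i where "e = {(x#y#xs) ! i, (x#y#xs) ! Suc i}" "Suc i < length (x#y#xs)" by blast
    then show "e \<in> insert {x, y} {{(y#xs) ! i, (y#xs) ! Suc i} |i. Suc i < length (y#xs)}"
      by (cases i) auto
  next
    fix e assume "e \<in> insert {x, y} {{(y#xs) ! i, (y#xs) ! Suc i} |i. Suc i < length (y#xs)}"
    then show "e \<in> {{(x#y#xs) ! i, (x#y#xs) ! Suc i} |i. Suc i < length (x#y#xs)}"
    proof
      assume "e = {x,y}" then show ?thesis by (intro CollectI exI[of _ 0]) auto
    next
      assume "e \<in> {{(y#xs) ! i, (y#xs) ! Suc i} |i. Suc i < length (y#xs)}"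
      then obtain i where "e = {(y#xs) ! i, (y#xs) ! Suc i}" "Suc i < length (y#xs)" by blast
      then show ?thesis by (intro CollectI exI[of _ "Suc i"]) auto
    qed
  qed
  then show ?case using 3 by simp
qed (auto simp: path_edges_def)


lemma wk_Cons: "wk E (x # ys) \<longleftrightarrow> (ys = [] \<or> ({x, hd ys} \<in> E \<and> wk E ys))"
  by (cases ys) auto

lemma wk_append: "wk E (xs @ ys) \<longleftrightarrow>
   (xs = [] \<and> wk E ys) \<or> (ys = [] \<and> wk E xs) \<or>
   (xs \<noteq> [] \<and> ys \<noteq> [] \<and> wk E xs \<and> wk E ys \<and> {last xs, hd ys} \<in> E)"
proof (induction xs)
  case Nil then show ?case by simp
next
  case (Cons x xs)
  show ?case
  proof (cases xs)
    case Nil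
    then show ?thesis by (cases ys) (auto simp: wk_Cons)
  next
    case (Cons z zs)
    then show ?thesis using Cons.IH by (cases ys) auto
  qed
qed

lemma pe_Cons: "pe (x # ys) = (if ys = [] then {} else insert {x, hd ys} (pe ys))"
  by (cases ys) auto

lemma pe_append: "xs \<noteq> [] \<Longrightarrow> ys \<noteq> [] \<Longrightarrow> pe (xs @ ys) = insert {last xs, hd ys} (pe xs \<union> pe ys)"
proof (induction xs)
  case Nil then show ?case by simp
next
  case (Cons x xs)
  show ?case
  proof (cases xs)
    case Nil
    then show ?thesis using Cons by (cases ys) auto
  next
    case (Cons z zs)
    then show ?thesis using Cons.IH \<open>ys \<noteq> []\<close> by auto
  qed
qed

lemma pe_append_le: "pe (xs @ ys) \<subseteq> pe xs \<union> pe ys \<union> {{last xs, hd ys}}"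
  by (cases "xs = []"; cases "ys = []") (auto simp: pe_append)

lemma wk_rev: "wk E (rev p) \<longleftrightarrow> wk E p"
proof (induction p rule: pe.induct)
  case (3 x y xs)
  have "rev (x#y#xs) = rev (y#xs) @ [x]" by simp
  moreover have "wk E (rev (y#xs) @ [x]) \<longleftrightarrow> wk E (rev (y#xs)) \<and> {y,x} \<in> E"
    by (subst wk_append) (simp add: last_rev del: rev.simps)
  ultimately show ?case using 3 by (simp only: wk.simps insert_commute) auto
qed auto

lemma pe_rev: "pe (rev p) = pe p"
proof (induction p rule: pe.induct)
  case (3 x y xs)
  have "rev (x#y#xs) = rev (y#xs) @ [x]" by simp
  moreover have "pe (rev (y#xs) @ [x]) = insert {y,x} (pe (rev (y#xs)))"
    by (subst pe_append; simp add: last_rev del: rev.simps)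
  ultimately show ?case using 3 by (simp only: pe.simps insert_commute)
qed auto

lemma pe_sub: "e \<in> pe p \<Longrightarrow> e \<subseteq> set p"
  by (induction p rule: pe.induct) auto

lemma wk_pe: "wk E p \<Longrightarrow> pe p \<subseteq> E"
  by (induction p rule: pe.induct) auto

lemma wk_minus: "wk (E - F) p \<longleftrightarrow> wk E p \<and> pe p \<inter> F = {}"
  by (induction p rule: pe.induct) auto

lemma wk_mono: "wk E p \<Longrightarrow> E \<subseteq> E' \<Longrightarrow> wk E' p"
  by (induction p rule: pe.induct) auto

lemma wk_nonempty: "wk E p \<Longrightarrow> p \<noteq> []" by auto

lemma walk_to_path:
  "wk E q \<Longrightarrow> \<exists>p. distinct p \<and> wk E p \<and> hd p = hd q \<and> last p = last q \<and> set p \<subseteq> set q \<and> pe p \<subseteq> pe q"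
proof (induction "length q" arbitrary: q rule: less_induct)
  case less
  show ?case
  proof (cases "distinct q")
    case True then show ?thesis using less.prems by blast
  next
    case False
    then obtain xs y ys zs where q: "q = xs @ [y] @ ys @ [y] @ zs"
      using not_distinct_decomp by blast
    define q' where "q' = xs @ [y] @ zs"
    have w: "wk E (xs @ [y] @ (ys @ [y] @ zs))" using less.prems q by simp
    then have w1: "wk E ([y] @ ys @ [y] @ zs)" by (auto simp: wk_append)
    have wz: "wk E ([y] @ zs)"
      using w1 wk_append[of E "[y] @ ys" "[y] @ zs"] by auto
    have wx: "xs \<noteq> [] \<Longrightarrow> wk E xs \<and> {last xs, y} \<in> E" using w
      by (auto simp: wk_append)
    have wq': "wk E q'" unfolding q'_def
      using wz wx wk_append[of E xs "[y] @ zs"] by auto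
    have pq': "pe q' \<subseteq> pe q"
    proof -
      have "pe ([y] @ zs) \<subseteq> pe ([y] @ ys @ [y] @ zs)"
        using pe_append_le[of "[y] @ ys" "[y] @ zs"] pe_append[of "[y] @ ys" "[y] @ zs"] by auto
      moreover have "xs \<noteq> [] \<Longrightarrow> pe q = insert {last xs, y} (pe xs \<union> pe ([y] @ ys @ [y] @ zs))"
        using q pe_append[of xs "[y] @ ys @ [y] @ zs"] by simp
      moreover have "xs \<noteq> [] \<Longrightarrow> pe q' = insert {last xs, y} (pe xs \<union> pe ([y] @ zs))"
        unfolding q'_def using pe_append[of xs "[y] @ zs"] by simp
      ultimately show ?thesis using q unfolding q'_def by (cases "xs = []") auto
    qed
    have "length q' < length q" unfolding q'_def q by simp
    then obtain p where p: "distinct p \<and> wk E p \<and> hd p = hd q' \<and> last p = last q' \<and> set p \<subseteq> set q' \<and> pe p \<subseteq> pe q'"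
      using less.hyps wq' by blast
    have "hd q' = hd q" "last q' = last q" "set q' \<subseteq> set q"
      unfolding q'_def q by (cases xs; cases zs; auto)+
    then show ?thesis using p pq' by (intro exI[of _ p]) auto
  qed
qed


locale tre =
  fixes V :: "'v set" and E :: "'v set set"
  assumes tree: "tree V E"
begin

lemma graph: "graph V E" using tree by (simp add: tree_def)

lemma edgeE: "e \<in> E \<Longrightarrow> \<exists>u v. e = {u,v} \<and> u \<noteq> v \<and> u \<in> V \<and> v \<in> V"
  using graph by (auto simp: graph_def)

lemma finV: "finite V" using graph by (simp add: graph_def)

lemma finE: "finite E"
proof -
  have "E \<subseteq> Pow V" using edgeE by blast
  then show ?thesis using finV by (meson finite_Pow_iff finite_subset)
qed

lemma edge_V: "{u,v} \<in> E \<Longrightarrow> u \<in> V \<and> v \<in> V"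
  using edgeE by (metis doubleton_eq_iff)

lemma edge_neq: "{u,v} \<in> E \<Longrightarrow> u \<noteq> v"
  using edgeE by (metis doubleton_eq_iff insert_absorb2)

lemma nocyc: "\<not> has_cycle E" using tree by (simp add: tree_def)

lemma conn: "u \<in> V \<Longrightarrow> v \<in> V \<Longrightarrow> \<exists>p. is_path E p \<and> hd p = u \<and> last p = v"
  using tree by (simp add: tree_def connected_graph_def)

lemma wk_V: "wk E p \<Longrightarrow> hd p \<in> V \<Longrightarrow> set p \<subseteq> V"
proof (induction p rule: pe.induct)
  case (3 x y xs)
  then show ?case using edge_V by auto
qed auto

lemma bridge:
  assumes e: "{u,w} \<in> E" and q: "wk (E - {{u,w}}) q" "hd q = u" "last q = w"
  shows False
proof -
  obtain p where p: "distinct p" "wk (E - {{u,w}}) p" "hd p = u" "last p = w"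
    using walk_to_path[OF q(1)] q by auto
  have uw: "u \<noteq> w" using edge_neq e by blast
  show False
  proof (cases p)
    case Nil then show ?thesis using p by simp
  next
    case (Cons a r)
    show ?thesis
    proof (cases r)
      case Nil then show ?thesis using p Cons uw by simp
    next
      case (Cons b r')
      show ?thesis
      proof (cases r')
        case Nil
        then show ?thesis using p \<open>p = a # r\<close> Cons by (simp add: wk_minus)
      next
        case (Cons c r'')
        have "is_path E p" using p wk_mono[of "E - {{u,w}}" p E] by (auto simp: is_path_wk)
        moreover have "3 \<le> length p" using \<open>p = a # r\<close> \<open>r = b # r'\<close> Cons by simp
        moreover have "{last p, hd p} \<in> E" using p e by (simp add: insert_commute)
        ultimately show ?thesis using nocyc by (auto simp: has_cycle_def)
      qed
    qed
  qed
qed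

lemma wk_concat: "wk E xs \<Longrightarrow> wk E ys \<Longrightarrow> last xs = hd ys \<Longrightarrow> wk E (xs @ tl ys)"
  by (cases ys) (auto simp: wk_append wk_Cons)

lemma pe_concat: "last xs = hd ys \<Longrightarrow> pe (xs @ tl ys) \<subseteq> pe xs \<union> pe ys"
proof (cases ys)
  case (Cons y ys')
  assume "last xs = hd ys"
  then show ?thesis using Cons pe_append_le[of xs ys'] by (auto simp: pe_Cons)
qed simp

lemma path_unique:
  "is_path E p \<Longrightarrow> is_path E q \<Longrightarrow> hd p = hd q \<Longrightarrow> last p = last q \<Longrightarrow> p = q"
proof (induction p arbitrary: q)
  case Nil then show ?case by (simp add: is_path_def)
next
  case (Cons a p')
  obtain q' where q: "q = a # q'" using Cons.prems by (cases q) (auto simp: is_path_def)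
  show ?case
  proof (cases "p' = []")
    case True
    then have "last q = a" using Cons.prems by simp
    have "q' = []"
    proof (rule ccontr)
      assume "q' \<noteq> []"
      then have "last q' = a" using \<open>last q = a\<close> q by simp
      then show False using \<open>q' \<noteq> []\<close> Cons.prems(2) q by (auto simp: is_path_def)
    qed
    then show ?thesis using q True by simp
  next
    case False
    have "q' \<noteq> []"
    proof
      assume "q' = []"
      then have "last p' = a" using Cons.prems q False by simp
      then show False using Cons.prems(1) False by (auto simp: is_path_def)
    qed
    have pp': "is_path E p'" using Cons.prems(1) False by (auto simp: is_path_wk wk_Cons)
    have qq': "is_path E q'" using Cons.prems(2) q \<open>q' \<noteq> []\<close> by (auto simp: is_path_wk wk_Cons)
    show ?thesis
    proof (cases "hd p' = hd q'")
      case True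
      have "last p' = last q'" using Cons.prems q False \<open>q' \<noteq> []\<close> by simp
      then show ?thesis using Cons.IH[OF pp' qq' True] q by simp
    next
      case hne: False
      define e where "e = {a, hd p'}"
      have eE: "e \<in> E" using Cons.prems(1) False by (auto simp: is_path_wk wk_Cons e_def)
      define w where "w = q @ tl (rev p')"
      have wkw: "wk E w" unfolding w_def
        using wk_concat[of q "rev p'"] Cons.prems q False pp' qq'
        by (auto simp: is_path_wk wk_rev last_rev hd_rev)
      have anq: "a \<notin> set q'" using Cons.prems(2) q by (simp add: is_path_def)
      have anp: "a \<notin> set p'" using Cons.prems(1) by (simp add: is_path_def)
      have "e \<notin> pe q"
      proof
        assume "e \<in> pe q"
        then have "e = {a, hd q'} \<or> e \<in> pe q'" using q \<open>q' \<noteq> []\<close> by (simp add: pe_Cons)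
        then show False
        proof
          assume "e = {a, hd q'}"
          then show False using hne unfolding e_def by (metis doubleton_eq_iff anq hd_in_set \<open>q' \<noteq> []\<close>)
        next
          assume "e \<in> pe q'"
          then show False using pe_sub anq unfolding e_def by blast
        qed
      qed
      moreover have "e \<notin> pe (rev p')" using pe_sub anp unfolding e_def pe_rev by blast
      ultimately have "e \<notin> pe w" unfolding w_def
        using pe_concat[of q "rev p'"] Cons.prems q False by (auto simp: last_rev hd_rev)
      then have "wk (E - {e}) w" using wkw by (simp add: wk_minus)
      moreover have "hd w = a" unfolding w_def using q by simp
      moreover have "last w = hd p'"
      proof (cases "tl (rev p') = []")
        case True
        then obtain x where "rev p' = [x]" using False
          by (metis Nil_is_rev_conv list.collapse)
        then have "p' = [x]" by (metis rev_rev_ident rev_singleton_conv)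
        then show ?thesis unfolding w_def using True Cons.prems q \<open>q' \<noteq> []\<close> by simp
      next
        case tF: False
        have "last (tl (rev p')) = last (rev p')" using tF by (metis last_tl)
        then show ?thesis unfolding w_def using tF by (simp add: last_rev)
      qed
      ultimately show ?thesis using bridge eE unfolding e_def by blast
    qed
  qed
qed



lemma wk_prefix: "wk E (xs @ ys) \<Longrightarrow> xs \<noteq> [] \<Longrightarrow> wk E xs"
  by (auto simp: wk_append)

lemma wk_suffix: "wk E (xs @ ys) \<Longrightarrow> ys \<noteq> [] \<Longrightarrow> wk E ys"
  by (auto simp: wk_append)

lemma seg_aux:
  assumes p: "is_path E p" and sp: "p = as @ x # bs" and y: "y \<in> set bs"
  shows "\<exists>s. is_path E s \<and> hd s = x \<and> last s = y \<and> set s \<subseteq> set p \<and> 2 \<le> length s"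
proof -
  obtain cs ds where bs: "bs = cs @ y # ds" using y split_list by metis
  have "p = as @ (x # cs @ [y]) @ ds" using sp bs by simp
  then have "wk E (as @ (x # cs @ [y]) @ ds)" "distinct (as @ (x # cs @ [y]) @ ds)"
    using p by (auto simp: is_path_wk)
  then have w1: "wk E ((x # cs @ [y]) @ ds)" "distinct (x # cs @ [y])"
    using wk_suffix[of as "(x # cs @ [y]) @ ds"] by auto
  then have "wk E (x # cs @ [y])" using wk_prefix[of "x # cs @ [y]" ds] by simp
  then show ?thesis using sp bs w1(2) by (intro exI[of _ "x # cs @ [y]"]) (auto simp: is_path_wk)
qed

lemma seg:
  assumes p: "is_path E p" and "x \<in> set p" "y \<in> set p" "x \<noteq> y"
  shows "\<exists>s. is_path E s \<and> hd s = x \<and> last s = y \<and> set s \<subseteq> set p \<and> 2 \<le> length s"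
proof -
  obtain as bs where sp: "p = as @ x # bs" using assms(2) split_list by metis
  then have "y \<in> set bs \<or> y \<in> set as" using assms by auto
  then show ?thesis
  proof
    assume "y \<in> set bs" then show ?thesis using seg_aux p sp by blast
  next
    assume "y \<in> set as"
    have "is_path E (rev p)" using p by (simp add: is_path_wk wk_rev)
    moreover have "rev p = rev bs @ x # rev as" using sp by simp
    ultimately obtain s where "is_path E s \<and> hd s = x \<and> last s = y \<and> set s \<subseteq> set (rev p) \<and> 2 \<le> length s"
      using seg_aux[of "rev p" "rev bs" x "rev as" y] \<open>y \<in> set as\<close> by auto
    then show ?thesis by auto
  qed
qed

end

locale rooted = tre +
  fixes \<rho> assumes rho: "\<rho> \<in> V"
begin

definition rp where "rp v = (THE p. is_path E p \<and> hd p = \<rho> \<and> last p = v)"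

definition par where "par v = last (butlast (rp v))"

lemma rp: "v \<in> V \<Longrightarrow> is_path E (rp v) \<and> hd (rp v) = \<rho> \<and> last (rp v) = v"
proof -
  assume v: "v \<in> V"
  obtain p where p: "is_path E p \<and> hd p = \<rho> \<and> last p = v" using conn[OF rho v] by blast
  have "\<exists>!p. is_path E p \<and> hd p = \<rho> \<and> last p = v"
    using p path_unique by (intro ex1I[of _ p]) auto
  then show ?thesis unfolding rp_def by (rule theI')
qed

lemma rp_eq: "is_path E p \<Longrightarrow> hd p = \<rho> \<Longrightarrow> last p = v \<Longrightarrow> rp v = p"
proof -
  assume a: "is_path E p" "hd p = \<rho>" "last p = v"
  have "set p \<subseteq> V" using wk_V[of p] a rho by (auto simp: is_path_wk)
  moreover have "v \<in> set p" using a by (auto simp: is_path_def)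
  ultimately have "v \<in> V" by blast
  then show ?thesis using path_unique[of "rp v" p] rp[of v] a by simp
qed

lemma rp_rho: "rp \<rho> = [\<rho>]"
  by (rule rp_eq) (auto simp: is_path_wk)

lemma rp_par:
  assumes v: "v \<in> V" "v \<noteq> \<rho>"
  shows "rp v = rp (par v) @ [v] \<and> {par v, v} \<in> E \<and> par v \<in> V \<and> par v \<noteq> v \<and> par v \<notin> set [v]
         \<and> v \<notin> set (rp (par v))"
proof -
  have r: "is_path E (rp v)" "hd (rp v) = \<rho>" "last (rp v) = v" using rp v by auto
  define b where "b = butlast (rp v)"
  have rv: "rp v = b @ [v]" unfolding b_def using r by (metis append_butlast_last_id is_path_def)
  have "b \<noteq> []"
  proof
    assume "b = []" then have "rp v = [v]" using rv by simp
    then show False using r v by simp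
  qed
  have "wk E b" "distinct b" using r rv \<open>b \<noteq> []\<close> wk_prefix by (auto simp: is_path_wk)
  moreover have "hd b = \<rho>" using r rv \<open>b \<noteq> []\<close> by simp
  ultimately have "rp (last b) = b" using rp_eq by (auto simp: is_path_wk)
  moreover have "par v = last b" unfolding par_def b_def ..
  moreover have "{last b, v} \<in> E" using r rv \<open>b \<noteq> []\<close> by (auto simp: is_path_wk wk_append)
  moreover have "v \<notin> set b" using r rv by (auto simp: is_path_wk)
  ultimately show ?thesis using rv edge_V edge_neq by auto
qed

lemma rp_len: "v \<in> V \<Longrightarrow> v \<noteq> \<rho> \<Longrightarrow> length (rp (par v)) < length (rp v)"
proof -
  assume a: "v \<in> V" "v \<noteq> \<rho>"
  have "rp v = rp (par v) @ [v]" using rp_par[OF a] by (rule conjunct1)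
  then show ?thesis by simp
qed

lemma rp_len_ge: "v \<in> V \<Longrightarrow> v \<noteq> \<rho> \<Longrightarrow> 2 \<le> length (rp v)"
proof -
  assume "v \<in> V" "v \<noteq> \<rho>"
  then have a: "rp v = rp (par v) @ [v]" "par v \<in> V" using rp_par[of v] by simp_all
  have "rp (par v) \<noteq> []" using rp[OF a(2)] by (simp add: is_path_def)
  then show ?thesis using a(1) by (cases "rp (par v)") auto
qed

lemma edge_par:
  assumes e: "{u,w} \<in> E"
  shows "(w \<noteq> \<rho> \<and> par w = u) \<or> (u \<noteq> \<rho> \<and> par u = w)"
proof -
  have V: "u \<in> V" "w \<in> V" using edge_V[OF e] by blast+
  have uw: "u \<noteq> w" using edge_neq[OF e] .
  note r0 = rp[OF V(1)]
  have r: "is_path E (rp u)" "hd (rp u) = \<rho>" "last (rp u) = u" using r0 by blast+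
  have ne: "rp u \<noteq> []" using r(1) unfolding is_path_def by blast
  show ?thesis
  proof (cases "w \<in> set (rp u)")
    case False
    have "distinct (rp u @ [w])" using r(1) False unfolding is_path_def by simp
    moreover have "wk E (rp u @ [w])"
    proof -
      have "{last (rp u), w} \<in> E" using r(3) e by simp
      then show ?thesis using r(1) ne unfolding is_path_wk wk_append by simp
    qed
    ultimately have "is_path E (rp u @ [w])" unfolding is_path_wk by blast
    moreover have "hd (rp u @ [w]) = \<rho>" using r(2) ne by simp
    moreover have "last (rp u @ [w]) = w" by simp
    ultimately have rw: "rp w = rp u @ [w]" by (rule rp_eq)
    have "w \<noteq> \<rho>"
    proof
      assume "w = \<rho>" then have "w \<in> set (rp u)" using r(2) ne hd_in_set by metis
      then show False using False by simp
    qed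
    moreover have "par w = u" unfolding par_def rw using r(3) by simp
    ultimately show ?thesis by blast
  next
    case True
    then obtain xs ys where sp: "rp u = xs @ w # ys" using split_list by metis
    have "ys \<noteq> []" using sp r(3) uw by auto
    have "is_path E (xs @ [w, u])"
    proof -
      have d: "distinct (rp u)" "wk E (rp u)" using r(1) unfolding is_path_wk by blast+
      have "wk E (xs @ [w])" using d(2) sp wk_prefix[of "xs @ [w]" ys] by simp
      moreover have "u \<notin> set (xs @ [w])"
      proof -
        have "u = last ys" using r(3) sp \<open>ys \<noteq> []\<close> by simp
        then have "u \<in> set ys" using \<open>ys \<noteq> []\<close> by simp
        then show ?thesis using d(1) sp by auto
      qed
      moreover have "distinct (xs @ [w])" using d(1) sp by simp
      moreover have "{w,u} \<in> E" using e by (simp add: insert_commute)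
      ultimately have "wk E ((xs @ [w]) @ [u])" "distinct ((xs @ [w]) @ [u])"
        unfolding wk_append by auto
      then show ?thesis unfolding is_path_wk by simp
    qed
    moreover have "hd (xs @ [w, u]) = \<rho>" using r(2) sp by (cases xs) auto
    moreover have "last (xs @ [w, u]) = u" by simp
    ultimately have ru: "rp u = xs @ [w, u]" by (rule rp_eq)
    have "par u = w" unfolding par_def ru by (simp add: butlast_append)
    moreover have "u \<noteq> \<rho>"
    proof
      assume "u = \<rho>" then have "rp u = [\<rho>]" using rp_rho by simp
      then show False using ru by (cases xs) auto
    qed
    ultimately show ?thesis by blast
  qed
qed

end




context rooted begin

lemma prefix_shorter:
  assumes t: "t \<in> V" and x: "x \<in> set (rp t)" "x \<noteq> t"
  shows "length (rp x) < length (rp t)"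
proof -
  have r: "is_path E (rp t)" "hd (rp t) = \<rho>" "last (rp t) = t" using rp[OF t] by blast+
  obtain xs ys where sp: "rp t = xs @ x # ys" using x(1) split_list by metis
  have "ys \<noteq> []" using sp r(3) x(2) by auto
  have d: "distinct (rp t)" "wk E (rp t)" using r(1) unfolding is_path_wk by blast+
  have "wk E (xs @ [x])" using d(2) sp wk_prefix[of "xs @ [x]" ys] by simp
  moreover have "distinct (xs @ [x])" using d(1) sp by simp
  ultimately have "is_path E (xs @ [x])" unfolding is_path_wk by simp
  moreover have "hd (xs @ [x]) = \<rho>" using r(2) sp by (cases xs) auto
  moreover have "last (xs @ [x]) = x" by simp
  ultimately have "rp x = xs @ [x]" by (rule rp_eq)
  then show ?thesis using sp \<open>ys \<noteq> []\<close> by simp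
qed

lemma top:
  assumes p: "is_path E p" "set p \<subseteq> V"
  shows "\<exists>t\<in>set p. \<forall>v\<in>set p. v \<noteq> t \<longrightarrow> v \<noteq> \<rho> \<and> par v \<in> set p"
proof -
  have "hd p \<in> set p" using p(1) by (simp add: is_path_def)
  then obtain t where t: "t \<in> set p" and tmin: "\<And>y. y \<in> set p \<Longrightarrow> length (rp t) \<le> length (rp y)"
    using ex_has_least_nat[of "\<lambda>x. x \<in> set p" "hd p" "\<lambda>x. length (rp x)"] by blast
  have tV: "t \<in> V" using t p(2) by blast
  have r: "is_path E (rp t)" "hd (rp t) = \<rho>" "last (rp t) = t" using rp[OF tV] by blast+
  have "\<forall>v\<in>set p. v \<noteq> t \<longrightarrow> v \<noteq> \<rho> \<and> par v \<in> set p"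
  proof (intro ballI impI)
    fix v assume v: "v \<in> set p" "v \<noteq> t"
    obtain s where s: "is_path E s" "hd s = t" "last s = v" "set s \<subseteq> set p" "2 \<le> length s"
      using seg[OF p(1) t v(1) v(2)[symmetric]] by blast
    have tlne: "tl s \<noteq> []" using s(5) by (cases s) auto
    have ds: "distinct s" "wk E s" using s(1) unfolding is_path_wk by blast+
    have tnot: "t \<notin> set (tl s)" using ds(1) s(2) s(5) by (cases s) auto
    have tls: "set (tl s) \<subseteq> set p" using s(4) by (cases s) auto
    have disj: "set (rp t) \<inter> set (tl s) = {}"
    proof (rule ccontr)
      assume "set (rp t) \<inter> set (tl s) \<noteq> {}"
      then obtain x where x: "x \<in> set (rp t)" "x \<in> set (tl s)" by blast
      have "x \<noteq> t" using x(2) tnot by blast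
      then have "length (rp x) < length (rp t)" using prefix_shorter[OF tV x(1)] by blast
      moreover have "length (rp t) \<le> length (rp x)" using tmin x(2) tls by blast
      ultimately show False by simp
    qed
    define q where "q = rp t @ tl s"
    have "wk E q" unfolding q_def using wk_concat[of "rp t" s] r ds s(2)
      unfolding is_path_wk by simp
    moreover have "distinct q" unfolding q_def using r(1) ds(1) disj
      by (simp add: is_path_def distinct_tl)
    ultimately have "is_path E q" unfolding is_path_wk by simp
    moreover have "hd q = \<rho>" unfolding q_def using r by (simp add: is_path_def)
    moreover have "last q = v" unfolding q_def using tlne s(3) s(5)
      by (cases s) auto
    ultimately have rv: "rp v = q" by (rule rp_eq)
    have lq: "2 \<le> length q" unfolding q_def using tlne r(1)
      by (cases "rp t"; cases "tl s") (auto simp: is_path_def)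
    have "v \<noteq> \<rho>"
    proof
      assume "v = \<rho>" then have "q = [\<rho>]" using rv rp_rho by simp
      then show False using lq by simp
    qed
    moreover have "par v \<in> set p"
    proof -
      have "par v = last (rp t @ butlast (tl s))" unfolding par_def rv q_def
        using tlne by (simp add: butlast_append)
      then show ?thesis
      proof (cases "butlast (tl s) = []")
        case True
        then show ?thesis using \<open>par v = _\<close> r(3) t by simp
      next
        case False
        then have "par v \<in> set (butlast (tl s))" using \<open>par v = _\<close> by simp
        then have "par v \<in> set (tl s)" by (rule in_set_butlastD)
        then show ?thesis using tls by (rule subsetD[rotated])
      qed
    qed
    ultimately show "v \<noteq> \<rho> \<and> par v \<in> set p" by blast
  qed
  then show ?thesis using t by blast
qed

end



lemma card4:
  assumes "finite S" "a \<in> S" "b \<in> S" "c \<in> S" "d \<in> S"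
    "a \<noteq> b" "a \<noteq> c" "a \<noteq> d" "b \<noteq> c" "b \<noteq> d" "c \<noteq> d"
  shows "4 \<le> card S"
proof -
  have "card {a,b,c,d} = 4" using assms by simp
  moreover have "card {a,b,c,d} \<le> card S" using assms by (intro card_mono) auto
  ultimately show ?thesis by simp
qed

lemma pe_interior:
  assumes "is_path E p" "v \<in> set p" "v \<noteq> hd p" "v \<noteq> last p"
  shows "\<exists>a b. {a,v} \<in> pe p \<and> {v,b} \<in> pe p \<and> a \<noteq> b \<and> a \<noteq> v \<and> b \<noteq> v"
proof -
  obtain xs ys where sp: "p = xs @ v # ys" using assms(2) split_list by metis
  have xs: "xs \<noteq> []" using sp assms(3) by auto
  have ys: "ys \<noteq> []" using sp assms(4) by auto
  have d: "distinct p" using assms(1) by (simp add: is_path_def)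
  have "{last xs, v} \<in> pe p" using sp xs pe_append[of xs "v # ys"] by simp
  moreover have "{v, hd ys} \<in> pe p" using sp xs ys pe_append[of xs "v # ys"] by (simp add: pe_Cons)
  moreover have "last xs \<noteq> hd ys" "last xs \<noteq> v" "hd ys \<noteq> v"
    using d sp xs ys by (auto dest: last_in_set hd_in_set)
  ultimately show ?thesis by blast
qed

lemma pe_end:
  assumes "is_path E p" "hd p \<noteq> last p" "v = hd p \<or> v = last p"
  shows "\<exists>e\<in>pe p. v \<in> e"
proof -
  obtain a r where p: "p = a # r" using assms(1) by (cases p) (auto simp: is_path_def)
  have r: "r \<noteq> []" using p assms(2) by auto
  show ?thesis using assms(3)
  proof
    assume "v = hd p" then show ?thesis using p r by (auto simp: pe_Cons)
  next
    assume "v = last p"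
    obtain r' b where "r = r' @ [b]" using r by (metis append_butlast_last_id)
    then have "{last (a # r'), b} \<in> pe p" using p pe_append[of "a # r'" "[b]"] by simp
    then show ?thesis using \<open>v = last p\<close> p \<open>r = r' @ [b]\<close> by auto
  qed
qed

locale fam = tre V E for V :: "'v set" and E +
  fixes X :: "'v set" and k :: nat and P :: "nat \<Rightarrow> 'v list"
  assumes bin: "binary_phylo_tree X V E"
    and fam: "edge_disjoint_l2l_family X E k P"
    and cardX: "card X = 2 * k"
begin

lemma X_def': "X = {v \<in> V. degree E v \<le> 1}"
  using bin by (simp add: binary_phylo_tree_def phylo_tree_def leaves_def)

lemma XV: "X \<subseteq> V" using X_def' by blast

lemma finX: "finite X" using XV finV finite_subset by blast

lemma deg3: "v \<in> V \<Longrightarrow> card {e \<in> E. v \<in> e} \<le> 3"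
  using bin by (simp add: binary_phylo_tree_def degree_def)

lemma leaf_edge: "x \<in> X \<Longrightarrow> e1 \<in> E \<Longrightarrow> e2 \<in> E \<Longrightarrow> x \<in> e1 \<Longrightarrow> x \<in> e2 \<Longrightarrow> e1 = e2"
proof -
  assume a: "x \<in> X" "e1 \<in> E" "e2 \<in> E" "x \<in> e1" "x \<in> e2"
  have "card {e \<in> E. x \<in> e} \<le> Suc 0" using a(1) X_def' by (simp add: degree_def)
  moreover have "finite {e \<in> E. x \<in> e}" using finE by simp
  ultimately show ?thesis using a by (auto simp: card_le_Suc0_iff_eq)
qed

lemma two_edges_notleaf: "{a,v} \<in> E \<Longrightarrow> {v,b} \<in> E \<Longrightarrow> a \<noteq> b \<Longrightarrow> v \<notin> X"
proof
  assume a: "{a,v} \<in> E" "{v,b} \<in> E" "a \<noteq> b" "v \<in> X"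
  then have "{a,v} = {v,b}" using leaf_edge by blast
  moreover have "a \<noteq> v" using edge_neq a(1) by blast
  ultimately show False using a(3) by (metis doubleton_eq_iff)
qed

lemma Pi: "i < k \<Longrightarrow> is_path E (P i) \<and> hd (P i) \<in> X \<and> last (P i) \<in> X \<and> hd (P i) \<noteq> last (P i)"
  using fam by (simp add: edge_disjoint_l2l_family_def leaf_to_leaf_path_def)

lemma Pdisj: "i < k \<Longrightarrow> j < k \<Longrightarrow> i \<noteq> j \<Longrightarrow> pe (P i) \<inter> pe (P j) = {}"
  using fam by (simp add: edge_disjoint_l2l_family_def pe_idx)

lemma PE: "i < k \<Longrightarrow> pe (P i) \<subseteq> E"
  using Pi[of i] wk_pe[of E "P i"] by (simp add: is_path_wk)

lemma PV: "i < k \<Longrightarrow> set (P i) \<subseteq> V"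
  using Pi wk_V XV by (auto simp: is_path_wk)

lemma X_end: "i < k \<Longrightarrow> v \<in> set (P i) \<Longrightarrow> v \<in> X \<Longrightarrow> v = hd (P i) \<or> v = last (P i)"
proof (rule ccontr)
  assume a: "i < k" "v \<in> set (P i)" "v \<in> X" "\<not> (v = hd (P i) \<or> v = last (P i))"
  then obtain x y where "{x,v} \<in> pe (P i)" "{v,y} \<in> pe (P i)" "x \<noteq> y"
    using pe_interior[of E "P i" v] Pi by blast
  then show False using PE[OF a(1)] two_edges_notleaf a(3) by blast
qed

lemma vdisj: "i < k \<Longrightarrow> j < k \<Longrightarrow> v \<in> set (P i) \<Longrightarrow> v \<in> set (P j) \<Longrightarrow> i = j"
proof (rule ccontr)
  assume a: "i < k" "j < k" "v \<in> set (P i)" "v \<in> set (P j)" "i \<noteq> j"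
  show False
  proof (cases "v \<in> X")
    case True
    obtain e1 where e1: "e1 \<in> pe (P i)" "v \<in> e1" using pe_end[of E "P i" v] Pi[OF a(1)] X_end[OF a(1) a(3) True] by blast
    obtain e2 where e2: "e2 \<in> pe (P j)" "v \<in> e2" using pe_end[of E "P j" v] Pi[OF a(2)] X_end[OF a(2) a(4) True] by blast
    have "e1 = e2" using leaf_edge[OF True _ _ e1(2) e2(2)] e1 e2 PE a by blast
    then show False using Pdisj[OF a(1) a(2) a(5)] e1 e2 by blast
  next
    case False
    have ni: "v \<noteq> hd (P i)" "v \<noteq> last (P i)" using False Pi[OF a(1)] by auto
    have nj: "v \<noteq> hd (P j)" "v \<noteq> last (P j)" using False Pi[OF a(2)] by auto
    obtain x1 y1 where 1: "{x1,v} \<in> pe (P i)" "{v,y1} \<in> pe (P i)" "x1 \<noteq> y1" "x1 \<noteq> v"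
      using pe_interior[of E "P i" v] Pi[OF a(1)] a(3) ni by blast
    obtain x2 y2 where 2: "{x2,v} \<in> pe (P j)" "{v,y2} \<in> pe (P j)"  "x2 \<noteq> y2" "x2 \<noteq> v"
      using pe_interior[of E "P j" v] Pi[OF a(2)] a(4) nj by blast
    have D: "pe (P i) \<inter> pe (P j) = {}" using Pdisj a by blast
    have n1: "{x1,v} \<noteq> {v,y1}" using 1(3,4) by (auto simp: doubleton_eq_iff)
    have n2: "{x2,v} \<noteq> {v,y2}" using 2(3,4) by (auto simp: doubleton_eq_iff)
    have ne: "\<And>a b. a \<in> pe (P i) \<Longrightarrow> b \<in> pe (P j) \<Longrightarrow> a \<noteq> b" using D by blast
    have S: "{x1,v} \<in> {e \<in> E. v \<in> e}" "{v,y1} \<in> {e \<in> E. v \<in> e}"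
       "{x2,v} \<in> {e \<in> E. v \<in> e}" "{v,y2} \<in> {e \<in> E. v \<in> e}"
      using 1 2 PE a by blast+
    have "4 \<le> card {e \<in> E. v \<in> e}"
      by (rule card4[OF _ S]) (use finE n1 n2 ne[OF 1(1) 2(1)] ne[OF 1(1) 2(2)] ne[OF 1(2) 2(1)] ne[OF 1(2) 2(2)] in simp_all)
    moreover have "v \<in> V" using PV a by blast
    ultimately show False using deg3[of v] by simp
  qed
qed

lemma cover: "x \<in> X \<Longrightarrow> \<exists>i<k. x = hd (P i) \<or> x = last (P i)"
proof -
  assume x: "x \<in> X"
  define en where "en = (\<lambda>(i::nat, b::bool). if b then hd (P i) else last (P i))"
  have inj: "inj_on en ({..<k} \<times> UNIV)"
  proof (rule inj_onI)
    fix a b assume a: "a \<in> {..<k} \<times> (UNIV::bool set)" "b \<in> {..<k} \<times> (UNIV::bool set)" "en a = en b"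
    obtain i c j d where ab: "a = (i,c)" "b = (j,d)" by (cases a, cases b)
    have ik: "i < k" "j < k" using a ab by auto
    have "en a \<in> set (P i)" "en b \<in> set (P j)" unfolding en_def ab using Pi[OF ik(1)] Pi[OF ik(2)]
      by (auto simp: is_path_def)
    then have "en a \<in> set (P j)" using a(3) by simp
    then have "i = j" using vdisj[OF ik(1) ik(2)] \<open>en a \<in> set (P i)\<close> by blast
    then show "a = b" using a(3) ab Pi[OF ik(1)] unfolding en_def by (cases c; cases d) auto
  qed
  have "en ` ({..<k} \<times> UNIV) \<subseteq> X" unfolding en_def using Pi by auto
  moreover have "card (en ` ({..<k} \<times> UNIV)) = card X"
    using card_image[OF inj] cardX by (simp add: card_cartesian_product)
  ultimately have "en ` ({..<k} \<times> UNIV) = X" using finX by (simp add: card_subset_eq)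
  then obtain i b where "i < k" "x = en (i,b)" using x by auto
  then show ?thesis unfolding en_def by (cases b) auto
qed

end




locale monoloc = fam V E X k P for V :: "'v set" and E X k P +
  fixes f :: "'v \<Rightarrow> bool" and i0 :: nat
  assumes i0: "i0 < k" and mono0: "f (hd (P i0)) = f (last (P i0))"
begin

lemma rhoV: "hd (P i0) \<in> V" using Pi[OF i0] XV by blast

sublocale rooted V E "hd (P i0)"
  by unfold_locales (rule rhoV)

abbreviation "\<rho> \<equiv> hd (P i0)"

definition mono where "mono i = (f (hd (P i)) = f (last (P i)))"
definition idx where "idx v = (SOME i. i < k \<and> v \<in> set (P i))"
definition special where "special v = (v \<in> X \<or> (\<exists>i<k. v \<in> set (P i) \<and> mono i))"
definition spcol where "spcol v = (if v \<in> X then f v else f (hd (P (idx v))))"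
definition g where "g v = spcol (last (filter special (rp v)))"

lemma idx: "i < k \<Longrightarrow> v \<in> set (P i) \<Longrightarrow> idx v = i"
proof -
  assume a: "i < k" "v \<in> set (P i)"
  have "idx v < k \<and> v \<in> set (P (idx v))" unfolding idx_def
    by (rule someI[of _ i]) (use a in simp)
  then show ?thesis using vdisj a by blast
qed

lemma spcol_mono: "i < k \<Longrightarrow> v \<in> set (P i) \<Longrightarrow> mono i \<Longrightarrow> spcol v = f (hd (P i))"
proof -
  assume a: "i < k" "v \<in> set (P i)" "mono i"
  show ?thesis
  proof (cases "v \<in> X")
    case True
    then have "v = hd (P i) \<or> v = last (P i)" using X_end a by blast
    then show ?thesis using True a(3) by (auto simp: spcol_def mono_def)
  next
    case False
    then show ?thesis using idx[OF a(1,2)] by (simp add: spcol_def)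
  qed
qed

lemma special_mono: "i < k \<Longrightarrow> v \<in> set (P i) \<Longrightarrow> mono i \<Longrightarrow> special v"
  unfolding special_def by blast

lemma rho_X: "\<rho> \<in> X" using Pi[OF i0] by blast

lemma rho_special: "special \<rho>" using rho_X by (simp add: special_def)

lemma g_special: "v \<in> V \<Longrightarrow> special v \<Longrightarrow> g v = spcol v"
proof -
  assume a: "v \<in> V" "special v"
  have r: "is_path E (rp v)" "last (rp v) = v" using rp[OF a(1)] by blast+
  then have "rp v = butlast (rp v) @ [v]" by (metis append_butlast_last_id is_path_def)
  then have "filter special (rp v) = filter special (butlast (rp v)) @ [v]"
    using a(2) by (metis filter.simps filter_append)
  then show ?thesis unfolding g_def by simp
qed

lemma g_nonspecial: "v \<in> V \<Longrightarrow> v \<noteq> \<rho> \<Longrightarrow> \<not> special v \<Longrightarrow> g v = g (par v)"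
proof -
  assume a: "v \<in> V" "v \<noteq> \<rho>" "\<not> special v"
  have rv: "rp v = rp (par v) @ [v]" using rp_par[OF a(1,2)] by (rule conjunct1)
  have pV: "par v \<in> V" using rp_par[OF a(1,2)] by blast
  have "\<rho> \<in> set (rp (par v))" using rp[OF pV] by (metis hd_in_set is_path_def)
  then have "filter special (rp (par v)) \<noteq> []" using rho_special by (simp add: filter_empty_conv) blast
  have "filter special (rp v) = filter special (rp (par v))" using rv a(3) by simp
  then show ?thesis unfolding g_def by simp
qed

lemma g_X: "x \<in> X \<Longrightarrow> g x = f x"
  using g_special XV by (auto simp: special_def spcol_def)

lemma leaf_par: "w \<in> X \<Longrightarrow> i < k \<Longrightarrow> w \<in> set (P i) \<Longrightarrow> w \<noteq> \<rho> \<Longrightarrow> par w \<in> set (P i)"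
proof -
  assume a: "w \<in> X" "i < k" "w \<in> set (P i)" "w \<noteq> \<rho>"
  have wV: "w \<in> V" using a XV by blast
  have pe: "{par w, w} \<in> E" using rp_par[OF wV a(4)] by blast
  obtain e where e: "e \<in> pe (P i)" "w \<in> e" using pe_end[of E "P i" w] Pi[OF a(2)] X_end[OF a(2) a(3) a(1)] by blast
  have "e = {par w, w}" using leaf_edge[OF a(1) _ pe e(2)] e(1) PE[OF a(2)] by blast
  then show ?thesis using pe_sub[OF e(1)] by blast
qed

lemma par_leaf: "v \<in> V \<Longrightarrow> v \<noteq> \<rho> \<Longrightarrow> par v \<in> X \<Longrightarrow> par v = \<rho>"
proof (rule ccontr)
  assume a: "v \<in> V" "v \<noteq> \<rho>" "par v \<in> X" "par v \<noteq> \<rho>"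
  have r1: "rp v = rp (par v) @ [v]" "{par v, v} \<in> E" "par v \<in> V" "v \<notin> set (rp (par v))"
    using rp_par[OF a(1,2)] by blast+
  have r2: "rp (par v) = rp (par (par v)) @ [par v]" "{par (par v), par v} \<in> E"
    using rp_par[OF r1(3) a(4)] by blast+
  have "par (par v) \<in> set (rp (par v))"
  proof -
    have "par (par v) \<in> V" using rp_par[OF r1(3) a(4)] by blast
    then have "rp (par (par v)) \<noteq> []" using rp by (auto simp: is_path_def)
    then have "last (rp (par (par v))) \<in> set (rp (par v))" using r2(1) by simp
    then show ?thesis using rp \<open>par (par v) \<in> V\<close> by simp
  qed
  then have "par (par v) \<noteq> v" using r1(4) by auto
  then show False using two_edges_notleaf[OF r2(2) r1(2)] a(3) by blast
qed

lemma top_rho: "v \<in> set (P i0) \<Longrightarrow> v \<noteq> \<rho> \<Longrightarrow> par v \<in> set (P i0)"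
proof -
  assume v: "v \<in> set (P i0)" "v \<noteq> \<rho>"
  obtain t where t: "t \<in> set (P i0)" "\<forall>v\<in>set (P i0). v \<noteq> t \<longrightarrow> v \<noteq> \<rho> \<and> par v \<in> set (P i0)"
    using top[of "P i0"] Pi[OF i0] PV[OF i0] by blast
  have "\<rho> \<in> set (P i0)" using Pi[OF i0] by (simp add: is_path_def)
  then have "t = \<rho>" using t(2) by force
  then show ?thesis using t(2) v by blast
qed

lemma special_path: "special w \<Longrightarrow> \<exists>i<k. w \<in> set (P i)"
proof -
  assume "special w"
  then show ?thesis
  proof (cases "w \<in> X")
    case True
    then obtain i where "i < k" "w = hd (P i) \<or> w = last (P i)" using cover by blast
    then show ?thesis using Pi[of i] by (auto simp: is_path_def)
  next
    case False then show ?thesis using \<open>special w\<close> by (auto simp: special_def)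
  qed
qed

lemma charge:
  assumes w: "w \<in> V" "w \<noteq> \<rho>" "g w \<noteq> g (par w)" "i < k" "w \<in> set (P i)"
  shows "i \<noteq> i0 \<and> ((w \<in> X \<and> \<not> mono i) \<or> (w \<notin> X \<and> mono i \<and> par w \<notin> set (P i)))"
proof -
  have pV: "par w \<in> V" using rp_par[OF w(1,2)] by blast
  have sw: "special w" using g_nonspecial[OF w(1,2)] w(3) by blast
  show ?thesis
  proof (cases "w \<in> X")
    case True
    have pw: "par w \<in> set (P i)" using leaf_par[OF True w(4) w(5) w(2)] .
    have nm: "\<not> mono i"
    proof
      assume m: "mono i"
      have "g (par w) = f (hd (P i))"
        using g_special[OF pV special_mono[OF w(4) pw m]] spcol_mono[OF w(4) pw m] by simp
      moreover have "g w = f (hd (P i))"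
        using g_special[OF w(1) sw] spcol_mono[OF w(4) w(5) m] by simp
      ultimately show False using w(3) by simp
    qed
    moreover have "i \<noteq> i0" using nm mono0 by (auto simp: mono_def)
    ultimately show ?thesis using True by blast
  next
    case False
    then obtain j where j: "j < k" "w \<in> set (P j)" "mono j" using sw by (auto simp: special_def)
    have "j = i" using vdisj[OF j(1) w(4) j(2) w(5)] .
    then have m: "mono i" using j(3) by simp
    have np: "par w \<notin> set (P i)"
    proof
      assume pw: "par w \<in> set (P i)"
      have "g (par w) = f (hd (P i))"
        using g_special[OF pV special_mono[OF w(4) pw m]] spcol_mono[OF w(4) pw m] by simp
      moreover have "g w = f (hd (P i))"
        using g_special[OF w(1) sw] spcol_mono[OF w(4) w(5) m] by simp
      ultimately show False using w(3) by simp
    qed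
    moreover have "i \<noteq> i0"
    proof
      assume "i = i0"
      then show False using top_rho w(5) w(2) np by blast
    qed
    ultimately show ?thesis using False m by blast
  qed
qed

lemma bi_internal:
  assumes i: "i < k" "\<not> mono i"
  shows "\<exists>c. \<forall>v\<in>set (P i). v \<notin> X \<longrightarrow> g v = c"
proof -
  have ii0: "i \<noteq> i0" using i(2) mono0 by (auto simp: mono_def)
  obtain t where t: "t \<in> set (P i)" "\<forall>v\<in>set (P i). v \<noteq> t \<longrightarrow> v \<noteq> \<rho> \<and> par v \<in> set (P i)"
    using top[of "P i"] Pi[OF i(1)] PV[OF i(1)] by blast
  have main: "v \<in> set (P i) \<Longrightarrow> v \<notin> X \<Longrightarrow> g v = g t" for v
  proof (induction "length (rp v)" arbitrary: v rule: less_induct)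
    case less
    show ?case
    proof (cases "v = t")
      case True then show ?thesis by simp
    next
      case False
      have vr: "v \<noteq> \<rho>" "par v \<in> set (P i)" using t(2) less.prems(1) False by blast+
      have vV: "v \<in> V" using PV[OF i(1)] less.prems(1) by blast
      have ns: "\<not> special v"
      proof
        assume "special v"
        then obtain j where "j < k" "v \<in> set (P j)" "mono j" using less.prems(2) by (auto simp: special_def)
        then show False using vdisj[OF _ i(1) _ less.prems(1)] i(2) by blast
      qed
      have pX: "par v \<notin> X"
      proof
        assume "par v \<in> X"
        then have "par v = \<rho>" using par_leaf[OF vV vr(1)] by blast
        moreover have "\<rho> \<in> set (P i0)" using Pi[OF i0] by (simp add: is_path_def)
        ultimately show False using vdisj[OF i0 i(1) _ vr(2)] ii0 by simp
      qed
      have "length (rp (par v)) < length (rp v)" using rp_len[OF vV vr(1)] .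
      then have "g (par v) = g t" using less.hyps vr(2) pX by blast
      then show ?thesis using g_nonspecial[OF vV vr(1) ns] by simp
    qed
  qed
  then show ?thesis by blast
qed

definition CE :: "('v \<Rightarrow> bool) \<Rightarrow> 'v set set" where "CE h = {e \<in> E. \<exists>u v. e = {u,v} \<and> h u \<noteq> h v}"

lemma CE_child: "e \<in> CE g \<Longrightarrow> \<exists>w. w \<in> V \<and> w \<noteq> \<rho> \<and> e = {par w, w} \<and> g w \<noteq> g (par w)"
proof -
  assume "e \<in> CE g"
  then obtain u v where e: "e \<in> E" "e = {u,v}" "g u \<noteq> g v" unfolding CE_def by blast
  have uv: "u \<in> V" "v \<in> V" using edge_V e by blast+
  have "(v \<noteq> \<rho> \<and> par v = u) \<or> (u \<noteq> \<rho> \<and> par u = v)" using edge_par e by simp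
  then show ?thesis
  proof
    assume "v \<noteq> \<rho> \<and> par v = u" then show ?thesis using e uv by auto
  next
    assume "u \<noteq> \<rho> \<and> par u = v" then show ?thesis using e uv by (auto simp: insert_commute)
  qed
qed

definition ch where "ch e = (SOME w. w \<in> V \<and> w \<noteq> \<rho> \<and> e = {par w, w} \<and> g w \<noteq> g (par w))"

lemma ch: "e \<in> CE g \<Longrightarrow> ch e \<in> V \<and> ch e \<noteq> \<rho> \<and> e = {par (ch e), ch e} \<and> g (ch e) \<noteq> g (par (ch e))"
  unfolding ch_def using CE_child by (rule someI_ex)

lemma ch_idx: "e \<in> CE g \<Longrightarrow> idx (ch e) < k \<and> ch e \<in> set (P (idx (ch e)))"
proof -
  assume e: "e \<in> CE g"
  have "special (ch e)" using ch[OF e] g_nonspecial by blast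
  then obtain i where "i < k" "ch e \<in> set (P i)" using special_path by blast
  then show ?thesis using idx by simp
qed

lemma mono_bound: "changes E g \<le> k - 1"
proof -
  have cE: "changes E g = card (CE g)" unfolding changes_def CE_def ..
  have fin: "finite (CE g)" unfolding CE_def using finE by simp
  have maps: "idx \<circ> ch \<in> CE g \<rightarrow> {..<k} - {i0}"
  proof
    fix e assume e: "e \<in> CE g"
    have "idx (ch e) \<noteq> i0" using charge[of "ch e" "idx (ch e)"] ch[OF e] ch_idx[OF e] by blast
    then show "(idx \<circ> ch) e \<in> {..<k} - {i0}" using ch_idx[OF e] by simp
  qed
  have inj: "inj_on (idx \<circ> ch) (CE g)"
  proof (rule inj_onI)
    fix e1 e2 assume e: "e1 \<in> CE g" "e2 \<in> CE g" "(idx \<circ> ch) e1 = (idx \<circ> ch) e2"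
    define w1 where "w1 = ch e1"
    define w2 where "w2 = ch e2"
    define i where "i = idx w1"
    have c1: "w1 \<in> V" "w1 \<noteq> \<rho>" "e1 = {par w1, w1}" "g w1 \<noteq> g (par w1)" using ch[OF e(1)] unfolding w1_def by blast+
    have c2: "w2 \<in> V" "w2 \<noteq> \<rho>" "e2 = {par w2, w2}" "g w2 \<noteq> g (par w2)" using ch[OF e(2)] unfolding w2_def by blast+
    have i1: "i < k" "w1 \<in> set (P i)" using ch_idx[OF e(1)] unfolding i_def w1_def by blast+
    have i2: "w2 \<in> set (P i)" using ch_idx[OF e(2)] e(3) unfolding i_def w1_def w2_def by simp
    have ch1: "i \<noteq> i0 \<and> ((w1 \<in> X \<and> \<not> mono i) \<or> (w1 \<notin> X \<and> mono i \<and> par w1 \<notin> set (P i)))"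
      using charge[OF c1(1) c1(2) c1(4) i1] .
    have ch2: "i \<noteq> i0 \<and> ((w2 \<in> X \<and> \<not> mono i) \<or> (w2 \<notin> X \<and> mono i \<and> par w2 \<notin> set (P i)))"
      using charge[OF c2(1) c2(2) c2(4) i1(1) i2] .
    have "w1 = w2"
    proof (cases "mono i")
      case True
      obtain t where t: "t \<in> set (P i)" "\<forall>v\<in>set (P i). v \<noteq> t \<longrightarrow> v \<noteq> \<rho> \<and> par v \<in> set (P i)"
        using top[of "P i"] Pi[OF i1(1)] PV[OF i1(1)] by blast
      have "w1 = t" using t(2) i1(2) ch1 True by blast
      moreover have "w2 = t" using t(2) i2 ch2 True by blast
      ultimately show ?thesis by simp
    next
      case False
      have X: "w1 \<in> X" "w2 \<in> X" using ch1 ch2 False by blast+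
      show ?thesis
      proof (rule ccontr)
        assume ne: "w1 \<noteq> w2"
        have ends: "w1 = hd (P i) \<or> w1 = last (P i)" "w2 = hd (P i) \<or> w2 = last (P i)"
          using X_end[OF i1(1)] i1(2) i2 X by blast+
        have "f w1 \<noteq> f w2" using ends ne False by (auto simp: mono_def)
        obtain c where c: "\<forall>v\<in>set (P i). v \<notin> X \<longrightarrow> g v = c" using bi_internal[OF i1(1) False] by blast
        have p1: "par w1 \<in> set (P i)" using leaf_par[OF X(1) i1 c1(2)] .
        have p2: "par w2 \<in> set (P i)" using leaf_par[OF X(2) i1(1) i2 c2(2)] .
        have rho_not: "\<rho> \<notin> set (P i)"
        proof
          assume "\<rho> \<in> set (P i)"
          moreover have "\<rho> \<in> set (P i0)" using Pi[OF i0] by (simp add: is_path_def)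
          ultimately show False using vdisj[OF i1(1) i0] ch1 by blast
        qed
        have "par w1 \<notin> X" using par_leaf[OF c1(1) c1(2)] p1 rho_not by auto
        moreover have "par w2 \<notin> X" using par_leaf[OF c2(1) c2(2)] p2 rho_not by auto
        ultimately have "g (par w1) = c" "g (par w2) = c" using c p1 p2 by blast+
        moreover have "g w1 = f w1" "g w2 = f w2" using g_X X by blast+
        ultimately show False using c1(4) c2(4) \<open>f w1 \<noteq> f w2\<close> by auto
      qed
    qed
    then show "e1 = e2" using c1(3) c2(3) by simp
  qed
  have "card (CE g) \<le> card ({..<k} - {i0})"
    using card_inj_on_le[OF inj _ ] maps by (simp add: Pi_iff image_subset_iff)
  also have "\<dots> = k - 1" using i0 by simp
  finally show ?thesis using cE by simp
qed

end




lemma change_on_walk: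
  "wk E p \<Longrightarrow> h (hd p) \<noteq> h (last p) \<Longrightarrow> \<exists>e\<in>pe p. \<exists>u v. e = {u,v} \<and> h u \<noteq> h v"
proof (induction p rule: pe.induct)
  case (3 x y xs)
  show ?case
  proof (cases "h x = h y")
    case True
    then have "h (hd (y#xs)) \<noteq> h (last (y#xs))" using 3 by simp
    then show ?thesis using 3 by auto
  next
    case False then show ?thesis by auto
  qed
qed auto

context fam begin

definition Cset where "Cset = {f \<in> X \<rightarrow>\<^sub>E (UNIV :: bool set). \<forall>i<k. f (hd (P i)) \<noteq> f (last (P i))}"

lemma lower:
  assumes bi: "\<forall>i<k. f (hd (P i)) \<noteq> f (last (P i))" and g: "\<forall>x\<in>X. g x = f x"
  shows "k \<le> changes E g"
proof -
  define S where "S = {e \<in> E. \<exists>u v. e = {u, v} \<and> g u \<noteq> g v}"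
  have fin: "finite S" unfolding S_def using finE by simp
  have ex: "\<forall>i<k. \<exists>e. e \<in> pe (P i) \<and> e \<in> S"
  proof (intro allI impI)
    fix i assume i: "i < k"
    have "g (hd (P i)) \<noteq> g (last (P i))" using g bi i Pi[OF i] by simp
    then obtain e where "e \<in> pe (P i)" "\<exists>u v. e = {u,v} \<and> g u \<noteq> g v"
      using change_on_walk[of E "P i" g] Pi[OF i] by (auto simp: is_path_wk)
    then show "\<exists>e. e \<in> pe (P i) \<and> e \<in> S" unfolding S_def using PE[OF i] by blast
  qed
  define ed where "ed i = (SOME e. e \<in> pe (P i) \<and> e \<in> S)" for i
  have ed: "ed i \<in> pe (P i) \<and> ed i \<in> S" if "i < k" for i
    unfolding ed_def by (rule someI_ex) (use ex that in blast)
  have "inj_on ed {..<k}"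
  proof (rule inj_onI)
    fix i j assume "i \<in> {..<k}" "j \<in> {..<k}" "ed i = ed j"
    then have "i < k" "j < k" "ed i \<in> pe (P i)" "ed i \<in> pe (P j)" using ed[of i] ed[of j] by auto
    then show "i = j" using Pdisj by blast
  qed
  moreover have "ed ` {..<k} \<subseteq> S" using ed by blast
  ultimately have "card {..<k} \<le> card S" using card_inj_on_le fin by blast
  then show ?thesis unfolding changes_def S_def[symmetric] by simp
qed

lemma upper:
  assumes bi: "\<forall>i<k. f (hd (P i)) \<noteq> f (last (P i))"
  shows "changes E (\<lambda>v. if v \<in> X then f v else False) \<le> k"
proof -
  define g0 where "g0 = (\<lambda>v. if v \<in> X then f v else False)"
  define S where "S = {e \<in> E. \<exists>u v. e = {u, v} \<and> g0 u \<noteq> g0 v}"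
  have ex: "\<exists>x. x \<in> e \<and> x \<in> X \<and> f x" if e: "e \<in> S" for e
  proof -
    obtain u v where "e = {u,v}" "g0 u \<noteq> g0 v" using e unfolding S_def by blast
    then show ?thesis unfolding g0_def by (cases "u \<in> X"; cases "v \<in> X") auto
  qed
  define tr where "tr e = (SOME x. x \<in> e \<and> x \<in> X \<and> f x)" for e
  have tr: "tr e \<in> e \<and> tr e \<in> X \<and> f (tr e)" if "e \<in> S" for e
    unfolding tr_def by (rule someI_ex) (use ex that in blast)
  define ix where "ix x = (SOME i. i < k \<and> (x = hd (P i) \<or> x = last (P i)))" for x
  have ix: "ix x < k \<and> (x = hd (P (ix x)) \<or> x = last (P (ix x)))" if "x \<in> X" for x
    unfolding ix_def by (rule someI_ex) (use cover that in blast)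
  have inj: "inj_on (ix \<circ> tr) S"
  proof (rule inj_onI)
    fix e1 e2 assume a: "e1 \<in> S" "e2 \<in> S" "(ix \<circ> tr) e1 = (ix \<circ> tr) e2"
    define i where "i = ix (tr e1)"
    have t1: "tr e1 \<in> e1" "tr e1 \<in> X" "f (tr e1)" using tr[OF a(1)] by blast+
    have t2: "tr e2 \<in> e2" "tr e2 \<in> X" "f (tr e2)" using tr[OF a(2)] by blast+
    have i1: "i < k" "tr e1 = hd (P i) \<or> tr e1 = last (P i)" using ix[OF t1(2)] unfolding i_def by blast+
    have i2: "tr e2 = hd (P i) \<or> tr e2 = last (P i)" using ix[OF t2(2)] a(3) unfolding i_def by simp
    have "tr e1 = tr e2" using i1 i2 t1(3) t2(3) bi by auto
    moreover have "e1 \<in> E" "e2 \<in> E" using a unfolding S_def by blast+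
    ultimately show "e1 = e2" using leaf_edge[OF t1(2) \<open>e1 \<in> E\<close> \<open>e2 \<in> E\<close> t1(1)] t2(1) by simp
  qed
  have "(ix \<circ> tr) ` S \<subseteq> {..<k}" using ix tr by auto
  then have "card S \<le> card {..<k}" using card_inj_on_le[OF inj] by blast
  then show ?thesis unfolding changes_def S_def g0_def by simp
qed

lemma bi_score:
  assumes bi: "\<forall>i<k. f (hd (P i)) \<noteq> f (last (P i))"
  shows "parsimony_score X E f = k"
  unfolding parsimony_score_def
proof (rule Least_equality)
  define g0 where "g0 = (\<lambda>v. if v \<in> X then f v else False)"
  have "\<forall>x\<in>X. g0 x = f x" unfolding g0_def by simp
  moreover have "changes E g0 = k" using upper[OF bi] lower[OF bi \<open>\<forall>x\<in>X. g0 x = f x\<close>] unfolding g0_def by simp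
  ultimately show "\<exists>g. (\<forall>x\<in>X. g x = f x) \<and> changes E g = k" by blast
next
  fix n assume "\<exists>g. (\<forall>x\<in>X. g x = f x) \<and> changes E g = n"
  then show "k \<le> n" using lower[OF bi] by blast
qed

lemma mono_score:
  assumes i0: "i0 < k" and m: "f (hd (P i0)) = f (last (P i0))"
  shows "parsimony_score X E f < k"
proof -
  interpret M: monoloc V E X k P f i0 by unfold_locales (use i0 m in auto)
  have "\<forall>x\<in>X. M.g x = f x" using M.g_X by blast
  then have "parsimony_score X E f \<le> changes E M.g" unfolding parsimony_score_def
    by (intro Least_le) blast
  then show ?thesis using M.mono_bound i0 by simp
qed

lemma Ak_char: "A_k k X E = Cset"
proof
  show "A_k k X E \<subseteq> Cset"
  proof
    fix f assume f: "f \<in> A_k k X E"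
    have "\<forall>i<k. f (hd (P i)) \<noteq> f (last (P i))"
    proof (intro allI impI notI)
      fix i assume "i < k" "f (hd (P i)) = f (last (P i))"
      then have "parsimony_score X E f < k" by (rule mono_score)
      then show False using f by (simp add: A_k_def)
    qed
    then show "f \<in> Cset" using f unfolding Cset_def A_k_def by blast
  qed
next
  show "Cset \<subseteq> A_k k X E" unfolding Cset_def A_k_def using bi_score by blast
qed

end




context fam begin

lemma Cset_pairs: "Cset = {f \<in> X \<rightarrow>\<^sub>E (UNIV :: bool set). \<forall>e\<in>endpoint_pairs k P. \<exists>x\<in>e. \<exists>y\<in>e. f x \<noteq> f y}"
  unfolding Cset_def endpoint_pairs_def by auto

lemma ep_disj: "j < k \<Longrightarrow> j' < k \<Longrightarrow> x \<in> {hd (P j), last (P j)} \<Longrightarrow> x \<in> {hd (P j'), last (P j')} \<Longrightarrow> j = j'"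
proof -
  assume a: "j < k" "j' < k" "x \<in> {hd (P j), last (P j)}" "x \<in> {hd (P j'), last (P j')}"
  have "P j \<noteq> []" "P j' \<noteq> []" using Pi[OF a(1)] Pi[OF a(2)] by (auto simp: is_path_def)
  then have hs: "hd (P j) \<in> set (P j)" "last (P j) \<in> set (P j)" "hd (P j') \<in> set (P j')" "last (P j') \<in> set (P j')"
    by auto
  have "x \<in> set (P j)" using a(3) hs by auto
  moreover have "x \<in> set (P j')" using a(4) hs by auto
  ultimately show ?thesis using vdisj a by blast
qed

end

lemma match_sub:
  fixes Q :: "nat \<Rightarrow> 'v list"
  assumes Pi': "\<And>j. j<k \<Longrightarrow> hd (Q j) \<in> X \<and> last (Q j) \<in> X \<and> hd (Q j) \<noteq> last (Q j)"
  and vd': "\<And>j j' x. j<k \<Longrightarrow> j'<k \<Longrightarrow> x \<in> {hd (Q j), last (Q j)} \<Longrightarrow> x \<in> {hd (Q j'), last (Q j')} \<Longrightarrow> j = j'"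
  and cov': "\<And>x. x \<in> X \<Longrightarrow> \<exists>j<k. x = hd (Q j) \<or> x = last (Q j)"
  and ab: "a \<in> X" "b \<in> X" "a \<noteq> b" "{a,b} \<notin> endpoint_pairs k Q"
  shows "\<exists>F \<in> X \<rightarrow>\<^sub>E (UNIV :: bool set). (\<forall>j<k. F (hd (Q j)) \<noteq> F (last (Q j))) \<and> F a = F b"
proof -
  obtain ia where ia: "ia < k" "a \<in> {hd (Q ia), last (Q ia)}" using cov'[OF ab(1)] by blast
  obtain ib where ib: "ib < k" "b \<in> {hd (Q ib), last (Q ib)}" using cov'[OF ab(2)] by blast
  have iab: "ia \<noteq> ib"
  proof
    assume "ia = ib"
    then have "{a,b} = {hd (Q ia), last (Q ia)}" using ia ib ab(3) by auto
    then show False using ab(4) ia(1) unfolding endpoint_pairs_def by blast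
  qed
  define F where "F z = (if z \<in> X then (z = a \<or> z = b \<or> (\<exists>j<k. j \<noteq> ia \<and> j \<noteq> ib \<and> z = hd (Q j))) else undefined)" for z
  have FE: "F \<in> X \<rightarrow>\<^sub>E (UNIV :: bool set)" unfolding F_def by auto
  have Fab: "F a = F b" unfolding F_def using ab by simp
  have "\<forall>j<k. F (hd (Q j)) \<noteq> F (last (Q j))"
  proof (intro allI impI)
    fix j assume j: "j < k"
    define h where "h = hd (Q j)"
    define l where "l = last (Q j)"
    have hl: "h \<in> X" "l \<in> X" "h \<noteq> l" using Pi'[OF j] unfolding h_def l_def by auto
    have nothd: "x \<in> {h, l} \<Longrightarrow> \<not> (\<exists>j'<k. j' \<noteq> ia \<and> j' \<noteq> ib \<and> x = hd (Q j')) \<or> (j \<noteq> ia \<and> j \<noteq> ib \<and> x = h)" for x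
    proof -
      assume x: "x \<in> {h, l}"
      show ?thesis
      proof (cases "\<exists>j'<k. j' \<noteq> ia \<and> j' \<noteq> ib \<and> x = hd (Q j')")
        case True
        then obtain j' where j': "j' < k" "j' \<noteq> ia" "j' \<noteq> ib" "x = hd (Q j')" by blast
        have "j' = j" using vd'[OF j' (1) j, of x] j'(4) x unfolding h_def l_def by auto
        then show ?thesis using j' unfolding h_def by simp
      qed simp
    qed
    show "F (hd (Q j)) \<noteq> F (last (Q j))"
    proof (cases "j = ia")
      case True
      have ja: "a \<in> {h, l}" using ia True unfolding h_def l_def by simp
      have nb: "b \<notin> {h, l}" using vd'[OF ib(1) j, of b] ib(2) iab True unfolding h_def l_def by auto
      show ?thesis
      proof (cases "a = h")
        case True
        have "l \<noteq> a" "l \<noteq> b" using hl True nb by auto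
        then have "F l = False" using nothd[of l] hl \<open>j = ia\<close> unfolding F_def by auto
        moreover have "F h = True" using True hl unfolding F_def by simp
        ultimately show ?thesis unfolding h_def l_def by simp
      next
        case False
        then have "a = l" using ja by simp
        have "h \<noteq> a" "h \<noteq> b" using hl \<open>a = l\<close> nb by auto
        then have "F h = False" using nothd[of h] hl \<open>j = ia\<close> unfolding F_def by auto
        moreover have "F l = True" using \<open>a = l\<close> hl unfolding F_def by simp
        ultimately show ?thesis unfolding h_def l_def by simp
      qed
    next
      case nia: False
      show ?thesis
      proof (cases "j = ib")
        case True
        have jb: "b \<in> {h, l}" using ib True unfolding h_def l_def by simp
        have na: "a \<notin> {h, l}" using vd'[OF ia(1) j, of a] ia(2) iab True unfolding h_def l_def by auto
        show ?thesis
        proof (cases "b = h")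
          case True
          have "l \<noteq> a" "l \<noteq> b" using hl True na by auto
          then have "F l = False" using nothd[of l] hl \<open>j = ib\<close> unfolding F_def by auto
          moreover have "F h = True" using True hl unfolding F_def by simp
          ultimately show ?thesis unfolding h_def l_def by simp
        next
          case False
          then have "b = l" using jb by simp
          have "h \<noteq> a" "h \<noteq> b" using hl \<open>b = l\<close> na by auto
          then have "F h = False" using nothd[of h] hl \<open>j = ib\<close> unfolding F_def by auto
          moreover have "F l = True" using \<open>b = l\<close> hl unfolding F_def by simp
          ultimately show ?thesis unfolding h_def l_def by simp
        qed
      next
        case nib: False
        have na: "a \<notin> {h, l}" using vd'[OF ia(1) j, of a] ia(2) nia unfolding h_def l_def by auto
        have nb: "b \<notin> {h, l}" using vd'[OF ib(1) j, of b] ib(2) nib unfolding h_def l_def by auto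
        have "F h = True" using hl j nia nib unfolding F_def h_def by auto
        moreover have "F l = False" using nothd[of l] hl na nb unfolding F_def by auto
        ultimately show ?thesis unfolding h_def l_def by simp
      qed
    qed
  qed
  then show ?thesis using FE Fab by blast
qed

lemma fam_sub:
  assumes F1: "fam V E X k P" and F2: "fam V' E' X k P'"
    and eq: "A_k k X E = A_k k X E'"
  shows "endpoint_pairs k P \<subseteq> endpoint_pairs k P'"
proof
  interpret A: fam V E X k P by (rule F1)
  interpret B: fam V' E' X k P' by (rule F2)
  fix e assume e: "e \<in> endpoint_pairs k P"
  then obtain i where i: "i < k" "e = {hd (P i), last (P i)}" unfolding endpoint_pairs_def by blast
  show "e \<in> endpoint_pairs k P'"
  proof (rule ccontr)
    assume ne: "e \<notin> endpoint_pairs k P'"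
    obtain G where G: "G \<in> X \<rightarrow>\<^sub>E (UNIV :: bool set)" "\<forall>j<k. G (hd (P' j)) \<noteq> G (last (P' j))"
      "G (hd (P i)) = G (last (P i))"
    proof -
      have h1: "\<And>j. j<k \<Longrightarrow> hd (P' j) \<in> X \<and> last (P' j) \<in> X \<and> hd (P' j) \<noteq> last (P' j)"
        using B.Pi by blast
      have ab: "hd (P i) \<in> X" "last (P i) \<in> X" "hd (P i) \<noteq> last (P i)" using A.Pi[OF i(1)] by blast+
      have ne': "{hd (P i), last (P i)} \<notin> endpoint_pairs k P'" using ne i(2) by simp
      have "\<exists>F \<in> X \<rightarrow>\<^sub>E (UNIV :: bool set). (\<forall>j<k. F (hd (P' j)) \<noteq> F (last (P' j))) \<and> F (hd (P i)) = F (last (P i))"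
        apply (rule match_sub[where Q = P'])
        using h1 apply blast
        apply (rule B.ep_disj; assumption)
        using B.cover apply blast
        using ab ne' apply blast+
        done
      then show ?thesis using that by blast
    qed
    have "G \<in> A_k k X E'" using B.Ak_char G unfolding B.Cset_def by blast
    then have "G \<in> A_k k X E" using eq by simp
    then have "G \<in> A.Cset" using A.Ak_char by simp
    then show False using G(3) i(1) unfolding A.Cset_def by blast
  qed
qed


theorem proposition5:
  fixes X V V' :: "'v set" and E E' :: "'v set set" and k :: nat
    and P P' :: "nat \<Rightarrow> 'v list"
  assumes "k \<ge> 1"
    and "binary_phylo_tree X V E" and "binary_phylo_tree X V' E'"
    and "card X = 2 * k"
    and "edge_disjoint_l2l_family X E k P"
    and "edge_disjoint_l2l_family X E' k P'"
  shows "A_k k X E = A_k k X E' \<longleftrightarrow> endpoint_pairs k P = endpoint_pairs k P'"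
proof -
  have t1: "tree V E" using assms(2) by (simp add: binary_phylo_tree_def phylo_tree_def)
  have t2: "tree V' E'" using assms(3) by (simp add: binary_phylo_tree_def phylo_tree_def)
  have F1: "fam V E X k P"
    by (intro fam.intro tre.intro fam_axioms.intro t1 assms(2,4,5))
  have F2: "fam V' E' X k P'"
    by (intro fam.intro tre.intro fam_axioms.intro t2 assms(3,4,6))
  interpret A: fam V E X k P by (rule F1)
  interpret B: fam V' E' X k P' by (rule F2)
  show ?thesis
  proof
    assume eq: "A_k k X E = A_k k X E'"
    show "endpoint_pairs k P = endpoint_pairs k P'"
      using fam_sub[OF F1 F2 eq] fam_sub[OF F2 F1 eq[symmetric]] by blast
  next
    assume eq: "endpoint_pairs k P = endpoint_pairs k P'"
    have "A_k k X E = A.Cset" by (rule A.Ak_char)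
    also have "\<dots> = B.Cset" unfolding A.Cset_pairs B.Cset_pairs eq ..
    also have "\<dots> = A_k k X E'" by (rule B.Ak_char[symmetric])
    finally show "A_k k X E = A_k k X E'" .
  qed
qed

end
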